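(* Let $e_j$ be an elliptic fixed point of $\Gamma$ of order $n_{e_j}$, let $\gamma_{e_j}$ be a generator of its stabilizer $\Gamma_{e_j}$ (chosen as in the context), and let $\mathcal{K}_{e_j}:=\{\sigma^{-1}\gamma_{e_j}\sigma\mid\sigma\in\Gamma\}$ be its $\Gamma$-conjugacy class. Then for $z\in\mathbb{H}$ with $z\neq\gamma e_j$ for all $\gamma\in\Gamma$ and $s\in\mathbb{C}$ with $\mathrm{Re}(s)>1$, $$\mathcal{E}^{\mathrm{ell}}_{e_j}(z,s)=\sin\Bigl(\frac{\pi}{n_{e_j}}\Bigr)^{s}\sum_{\gamma\in\mathcal{K}_{e_j}}u(z,\gamma z)^{-s/2},\qquad u(z,w):=\frac{|z-w|^2}{4\,\mathrm{Im}(z)\mathrm{Im}(w)}.$$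
   Context: $\Gamma\subset\mathrm{PSL}_2(\mathbb{R})$ is a Fuchsian group of the first kind acting on $\mathbb{H}$. For an elliptic fixed point $e_j$ of $\Gamma$, $\Gamma_{e_j}$ is its (finite cyclic) stabilizer of order $n_{e_j}>1$, and $\sigma_{e_j}\in\mathrm{PSL}_2(\mathbb{R})$ satisfies $\sigma_{e_j}i=e_j$; the generator $\gamma_{e_j}$ of $\Gamma_{e_j}$ is such that $\sigma_{e_j}^{-1}\gamma_{e_j}\sigma_{e_j}=\begin{pmatrix}\cos(\pi/n_{e_j})&\sin(\pi/n_{e_j})\\-\sin(\pi/n_{e_j})&\cos(\pi/n_{e_j})\end{pmatrix}$. With $\varrho(z):=d_{\mathrm{hyp}}(i,z)$ (hyperbolic distance), the elliptic Eisenstein series is $\mathcal{E}^{\mathrm{ell}}_{e_j}(z,s):=\sum_{\gamma\in\Gamma_{e_j}\backslash\Gamma}\sinh\bigl(\varrho(\sigma_{e_j}^{-1}\gamma z)\bigr)^{-s}$ for $z\notin\Gamma e_j$. *)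

theory Defs
  imports "HOL-Analysis.Analysis"
begin

text \<open>Elements of PSL_2(R) are represented by the unique SL_2(R) matrix
  (a,b,c,d) (meaning [[a,b],[c,d]]) in the class {g,-g} normalised by
  c > 0, or c = 0 and d > 0.\<close>

type_synonym mat2 = "real \<times> real \<times> real \<times> real"

definition pnorm :: "mat2 \<Rightarrow> mat2" where
  "pnorm g = (case g of (a,b,c,d) \<Rightarrow>
     if c > 0 \<or> (c = 0 \<and> d > 0) then (a,b,c,d) else (-a,-b,-c,-d))"

definition psl2 :: "mat2 \<Rightarrow> bool" where
  "psl2 g = (case g of (a,b,c,d) \<Rightarrow> a*d - b*c = 1 \<and> (c > 0 \<or> (c = 0 \<and> d > 0)))"

definition mmul :: "mat2 \<Rightarrow> mat2 \<Rightarrow> mat2" where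
  "mmul g h = (case g of (a,b,c,d) \<Rightarrow> case h of (a',b',c',d') \<Rightarrow>
     (a*a' + b*c', a*b' + b*d', c*a' + d*c', c*b' + d*d'))"

definition pmul :: "mat2 \<Rightarrow> mat2 \<Rightarrow> mat2" where
  "pmul g h = pnorm (mmul g h)"

definition pinv :: "mat2 \<Rightarrow> mat2" where
  "pinv g = (case g of (a,b,c,d) \<Rightarrow> pnorm (d,-b,-c,a))"

definition pid :: mat2 where
  "pid = (1,0,0,1)"

fun ppow :: "mat2 \<Rightarrow> nat \<Rightarrow> mat2" where
  "ppow g 0 = pid"
| "ppow g (Suc k) = pmul g (ppow g k)"

definition act :: "mat2 \<Rightarrow> complex \<Rightarrow> complex" where
  "act g z = (case g of (a,b,c,d) \<Rightarrow>
     (of_real a * z + of_real b) / (of_real c * z + of_real d))"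

definition upper_half_plane :: "complex set" ("\<H>") where
  "\<H> = {z. Im z > 0}"

definition mdist :: "mat2 \<Rightarrow> mat2 \<Rightarrow> real" where
  "mdist g h = (case g of (a,b,c,d) \<Rightarrow> case h of (a',b',c',d') \<Rightarrow>
     \<bar>a-a'\<bar> + \<bar>b-b'\<bar> + \<bar>c-c'\<bar> + \<bar>d-d'\<bar>)"

definition psl2_subgroup :: "mat2 set \<Rightarrow> bool" where
  "psl2_subgroup \<Gamma> \<longleftrightarrow> (\<forall>g\<in>\<Gamma>. psl2 g) \<and> pid \<in> \<Gamma> \<and>
     (\<forall>g\<in>\<Gamma>. \<forall>h\<in>\<Gamma>. pmul g h \<in> \<Gamma>) \<and> (\<forall>g\<in>\<Gamma>. pinv g \<in> \<Gamma>)"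

text \<open>Discreteness: the identity is isolated in the subgroup (in PSL_2(R),
  a neighbourhood of the identity is the image of neighbourhoods of I and -I).\<close>
definition fuchsian :: "mat2 set \<Rightarrow> bool" where
  "fuchsian \<Gamma> \<longleftrightarrow> psl2_subgroup \<Gamma> \<and>
     (\<exists>\<epsilon>>0. \<forall>g\<in>\<Gamma>. g \<noteq> pid \<longrightarrow> mdist g (1,0,0,1) \<ge> \<epsilon> \<and> mdist g (-1,0,0,-1) \<ge> \<epsilon>)"

text \<open>First kind: the limit set is all of R \<union> {\<infinity>}; since the limit set is
  closed, it suffices that every real point is a limit point of the orbit of i.\<close>
definition fuchsian_first_kind :: "mat2 set \<Rightarrow> bool" where
  "fuchsian_first_kind \<Gamma> \<longleftrightarrow> fuchsian \<Gamma> \<and>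
     (\<forall>x::real. complex_of_real x \<in> closure ((\<lambda>g. act g \<i>) ` \<Gamma>))"

definition hyp_dist :: "complex \<Rightarrow> complex \<Rightarrow> real" where
  "hyp_dist z w = arcosh (1 + (cmod (z - w))\<^sup>2 / (2 * Im z * Im w))"

definition rho :: "complex \<Rightarrow> real" where
  "rho z = hyp_dist \<i> z"

definition u_fun :: "complex \<Rightarrow> complex \<Rightarrow> real" where
  "u_fun z w = (cmod (z - w))\<^sup>2 / (4 * Im z * Im w)"

definition stabilizer :: "mat2 set \<Rightarrow> complex \<Rightarrow> mat2 set" where
  "stabilizer \<Gamma> e = {g\<in>\<Gamma>. act g e = e}"

text \<open>Right cosets \<Gamma>_e \<gamma>, i.e. the elements of \<Gamma>_e \ \<Gamma>.\<close>
definition left_quotient :: "mat2 set \<Rightarrow> mat2 set \<Rightarrow> mat2 set set" where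
  "left_quotient H \<Gamma> = {(\<lambda>h. pmul h \<gamma>) ` H | \<gamma>. \<gamma> \<in> \<Gamma>}"

text \<open>Elliptic Eisenstein series; the summand is evaluated at a representative
  of the coset (it is independent of the choice).\<close>
definition ell_eisenstein :: "mat2 set \<Rightarrow> complex \<Rightarrow> mat2 \<Rightarrow> complex \<Rightarrow> complex \<Rightarrow> complex" where
  "ell_eisenstein \<Gamma> e \<sigma> z s =
     (\<Sum>\<^sub>\<infinity> C \<in> left_quotient (stabilizer \<Gamma> e) \<Gamma>.
        complex_of_real (sinh (rho (act (pinv \<sigma>) (act (SOME \<gamma>. \<gamma> \<in> C) z)))) powr (-s))"

definition conj_class :: "mat2 set \<Rightarrow> mat2 \<Rightarrow> mat2 set" where
  "conj_class \<Gamma> g = {pmul (pinv \<sigma>) (pmul g \<sigma>) | \<sigma>. \<sigma> \<in> \<Gamma>}"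

end

theory Submission
  imports Defs
begin


definition mdet :: "mat2 \<Rightarrow> real" where
  "mdet m = (case m of (a,b,c,d) \<Rightarrow> a*d - b*c)"
definition mneg :: "mat2 \<Rightarrow> mat2" where
  "mneg m = (case m of (a,b,c,d) \<Rightarrow> (-a,-b,-c,-d))"
definition madj :: "mat2 \<Rightarrow> mat2" where
  "madj m = (case m of (a,b,c,d) \<Rightarrow> (d,-b,-c,a))"

lemma pnorm_cases: "pnorm m = m \<or> pnorm m = mneg m"
  by (cases m) (auto simp: pnorm_def mneg_def)

lemma pnorm_mneg: "mdet m \<noteq> 0 \<Longrightarrow> pnorm (mneg m) = pnorm m"
  by (cases m) (auto simp: pnorm_def mneg_def mdet_def)

lemma mdet_mmul: "mdet (mmul g h) = mdet g * mdet h"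
  by (cases g; cases h) (simp add: mdet_def mmul_def algebra_simps)

lemma mdet_mneg[simp]: "mdet (mneg m) = mdet m"
  by (cases m) (simp add: mdet_def mneg_def)

lemma mdet_pnorm[simp]: "mdet (pnorm m) = mdet m"
  using pnorm_cases[of m] by auto

lemma mmul_mneg1: "mmul (mneg a) b = mneg (mmul a b)"
  by (cases a; cases b) (simp add: mneg_def mmul_def)
lemma mmul_mneg2: "mmul a (mneg b) = mneg (mmul a b)"
  by (cases a; cases b) (simp add: mneg_def mmul_def)

lemma pnorm_mmul1: "mdet m \<noteq> 0 \<Longrightarrow> mdet k \<noteq> 0 \<Longrightarrow> pnorm (mmul (pnorm m) k) = pnorm (mmul m k)"
  using pnorm_cases[of m]
  by (auto simp: mmul_mneg1 pnorm_mneg mdet_mmul)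
lemma pnorm_mmul2: "mdet m \<noteq> 0 \<Longrightarrow> mdet k \<noteq> 0 \<Longrightarrow> pnorm (mmul k (pnorm m)) = pnorm (mmul k m)"
  using pnorm_cases[of m]
  by (auto simp: mmul_mneg2 pnorm_mneg mdet_mmul)

lemma psl2_det: "psl2 g \<Longrightarrow> mdet g = 1"
  by (cases g) (simp add: psl2_def mdet_def)

lemma psl2_pnorm_id: "psl2 g \<Longrightarrow> pnorm g = g"
  by (cases g) (simp add: psl2_def pnorm_def)

lemma psl2_pnorm: "mdet m = 1 \<Longrightarrow> psl2 (pnorm m)"
proof (cases m)
  case (fields a b c d)
  assume "mdet m = 1"
  hence det: "a*d - b*c = 1" using fields by (simp add: mdet_def)
  have "c = 0 \<Longrightarrow> d \<noteq> 0" using det by auto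
  then show ?thesis using fields det
    by (auto simp: pnorm_def psl2_def algebra_simps)
qed

lemma psl2_pmul[simp]: "psl2 g \<Longrightarrow> psl2 h \<Longrightarrow> psl2 (pmul g h)"
  by (simp add: pmul_def psl2_pnorm mdet_mmul psl2_det)

lemma madj_pinv: "pinv g = pnorm (madj g)"
  by (cases g) (simp add: pinv_def madj_def)

lemma mdet_madj[simp]: "mdet (madj g) = mdet g"
  by (cases g) (simp add: mdet_def madj_def algebra_simps)

lemma psl2_pinv[simp]: "psl2 g \<Longrightarrow> psl2 (pinv g)"
  by (simp add: madj_pinv psl2_pnorm psl2_det)

lemma psl2_pid[simp]: "psl2 pid"
  by (simp add: psl2_def pid_def)

lemma pmul_assoc: "psl2 g \<Longrightarrow> psl2 h \<Longrightarrow> psl2 k \<Longrightarrow> pmul (pmul g h) k = pmul g (pmul h k)"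
proof -
  assume g: "psl2 g" and h: "psl2 h" and k: "psl2 k"
  have "pmul (pmul g h) k = pnorm (mmul (mmul g h) k)"
    unfolding pmul_def using g h k by (simp add: pnorm_mmul1 mdet_mmul psl2_det)
  also have "mmul (mmul g h) k = mmul g (mmul h k)"
    by (cases g; cases h; cases k) (simp add: mmul_def algebra_simps)
  also have "pnorm (mmul g (mmul h k)) = pmul g (pmul h k)"
    unfolding pmul_def using g h k by (simp add: pnorm_mmul2 mdet_mmul psl2_det)
  finally show ?thesis .
qed

lemma pmul_pid1[simp]: "psl2 g \<Longrightarrow> pmul pid g = g"
  by (cases g) (simp add: pmul_def pid_def mmul_def psl2_pnorm_id)
lemma pmul_pid2[simp]: "psl2 g \<Longrightarrow> pmul g pid = g"
  by (cases g) (simp add: pmul_def pid_def mmul_def psl2_pnorm_id)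

lemma pmul_pinv1[simp]: "psl2 g \<Longrightarrow> pmul (pinv g) g = pid"
proof -
  assume g: "psl2 g"
  have "pmul (pinv g) g = pnorm (mmul (madj g) g)"
    unfolding pmul_def madj_pinv using g by (simp add: pnorm_mmul1 psl2_det)
  also have "mmul (madj g) g = pid" using psl2_det[OF g]
    by (cases g) (simp add: mmul_def madj_def pid_def mdet_def algebra_simps)
  finally show ?thesis by (simp add: pnorm_def pid_def)
qed
lemma pmul_pinv2[simp]: "psl2 g \<Longrightarrow> pmul g (pinv g) = pid"
proof -
  assume g: "psl2 g"
  have "pmul g (pinv g) = pnorm (mmul g (madj g))"
    unfolding pmul_def madj_pinv using g by (simp add: pnorm_mmul2 psl2_det)
  also have "mmul g (madj g) = pid" using psl2_det[OF g]
    by (cases g) (simp add: mmul_def madj_def pid_def mdet_def algebra_simps)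
  finally show ?thesis by (simp add: pnorm_def pid_def)
qed

lemma pmul_cancel1[simp]: "psl2 g \<Longrightarrow> psl2 x \<Longrightarrow> pmul (pinv g) (pmul g x) = x"
  by (simp flip: pmul_assoc)
lemma pmul_cancel2[simp]: "psl2 g \<Longrightarrow> psl2 x \<Longrightarrow> pmul g (pmul (pinv g) x) = x"
  by (simp flip: pmul_assoc)

lemma pinv_pmul: "psl2 g \<Longrightarrow> psl2 h \<Longrightarrow> pinv (pmul g h) = pmul (pinv h) (pinv g)"
proof -
  assume g: "psl2 g" and h: "psl2 h"
  let ?x = "pmul (pinv h) (pinv g)"
  have "?x = pmul ?x (pmul (pmul g h) (pinv (pmul g h)))" using g h by simp
  also have "\<dots> = pmul (pmul ?x (pmul g h)) (pinv (pmul g h))"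
    using g h by (simp only: pmul_assoc psl2_pmul psl2_pinv)
  also have "pmul ?x (pmul g h) = pid" using g h by (simp add: pmul_assoc)
  finally show ?thesis using g h by simp
qed



lemma denom_nz: "psl2 (a,b,c,d) \<Longrightarrow> Im z > 0 \<Longrightarrow> of_real c * z + of_real d \<noteq> 0"
proof
  assume p: "psl2 (a,b,c,d)" and z: "Im z > 0" and e: "of_real c * z + of_real d = 0"
  have "Im (of_real c * z + of_real d) = c * Im z" by simp
  hence "c = 0" using e z by simp
  moreover have "Re (of_real c * z + of_real d) = c * Re z + d" by simp
  ultimately have "d = 0" using e by simp
  thus False using p `c = 0` by (simp add: psl2_def)
qed

lemma Im_act: assumes "of_real c * z + of_real d \<noteq> 0"
  shows "Im (act (a,b,c,d) z) = (a*d - b*c) * Im z / (cmod (of_real c * z + of_real d))^2"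
proof -
  have "Im (act (a,b,c,d) z) = Im ((of_real a * z + of_real b) / (of_real c * z + of_real d))"
    by (simp add: act_def)
  also have "\<dots> = (Im (of_real a * z + of_real b) * Re (of_real c * z + of_real d)
      - Re (of_real a * z + of_real b) * Im (of_real c * z + of_real d)) / (cmod (of_real c * z + of_real d))^2"
    by (simp add: Im_divide cmod_power2)
  also have "\<dots> = (a*d - b*c) * Im z / (cmod (of_real c * z + of_real d))^2"
    by (simp add: algebra_simps)
  finally show ?thesis .
qed

lemma act_H: assumes "psl2 g" "z \<in> \<H>" shows "act g z \<in> \<H>"
proof (cases g)
  case (fields a b c d)
  have nz: "of_real c * z + of_real d \<noteq> 0" using denom_nz assms fields by (simp add: upper_half_plane_def)
  have det: "a*d - b*c = 1" using assms fields by (simp add: psl2_def)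
  show ?thesis using Im_act[OF nz, of a b] det nz assms fields by (simp add: upper_half_plane_def)
qed

lemma act_pnorm[simp]: "act (pnorm m) z = act m z"
proof (cases m)
  case (fields a b c d)
  have e1: "- (of_real b) - of_real a * z = - (of_real a * z + of_real b)" by simp
  have e2: "- (of_real d) - of_real c * z = - (of_real c * z + of_real d)" by simp
  have "(- (of_real b) - of_real a * z) / (- (of_real d) - of_real c * z)
      = (of_real a * z + of_real b) / (of_real c * z + of_real d)"
    unfolding e1 e2 by (rule minus_divide_divide)
  thus ?thesis using fields by (simp add: pnorm_def act_def)
qed

lemma act_mmul: assumes "of_real c' * z + of_real d' \<noteq> 0"
  shows "act (mmul (a,b,c,d) (a',b',c',d')) z = act (a,b,c,d) (act (a',b',c',d') z)"
proof -
  define A where "A = of_real a' * z + of_real b'"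
  define B where "B = of_real c' * z + of_real d'"
  have B: "B \<noteq> 0" using assms B_def by simp
  have 1: "of_real a * (A/B) + of_real b = (of_real a * A + of_real b * B) / B" using B by (simp add: field_simps)
  have 2: "of_real c * (A/B) + of_real d = (of_real c * A + of_real d * B) / B" using B by (simp add: field_simps)
  have 3: "((X::complex)/B) / (Y/B) = X / Y" for X Y using B by (cases "Y = 0") (simp_all add: field_simps)
  have "act (a,b,c,d) (act (a',b',c',d') z) = (of_real a * (A/B) + of_real b) / (of_real c * (A/B) + of_real d)"
    by (simp add: act_def A_def B_def)
  also have "\<dots> = (of_real a * A + of_real b * B) / (of_real c * A + of_real d * B)" unfolding 1 2 3 ..
  also have "\<dots> = act (mmul (a,b,c,d) (a',b',c',d')) z"
    by (simp add: act_def mmul_def A_def B_def algebra_simps)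
  finally show ?thesis ..
qed

lemma act_pmul: assumes "psl2 h" "z \<in> \<H>" shows "act (pmul g h) z = act g (act h z)"
proof (cases g; cases h)
  fix a b c d a' b' c' d' assume g: "g = (a,b,c,d)" and h: "h = (a',b',c',d')"
  have nz: "of_real c' * z + of_real d' \<noteq> 0" using denom_nz assms h by (simp add: upper_half_plane_def)
  show ?thesis using act_mmul[OF nz] g h by (simp add: pmul_def)
qed

lemma act_pid[simp]: "act pid z = z"
  by (simp add: act_def pid_def)

lemma act_pinv1[simp]: "psl2 g \<Longrightarrow> z \<in> \<H> \<Longrightarrow> act (pinv g) (act g z) = z"
  by (metis act_pmul act_pid pmul_pinv1)
lemma act_pinv2[simp]: "psl2 g \<Longrightarrow> z \<in> \<H> \<Longrightarrow> act g (act (pinv g) z) = z"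
  by (metis act_pmul act_pid pmul_pinv2 psl2_pinv)

lemma u_inv: assumes "psl2 g" "z \<in> \<H>" "w \<in> \<H>"
  shows "u_fun (act g z) (act g w) = u_fun z w"
proof (cases g)
  case (fields a b c d)
  define A where "A = of_real c * z + of_real d"
  define B where "B = of_real c * w + of_real d"
  have nzA: "A \<noteq> 0" using denom_nz assms fields by (simp add: upper_half_plane_def A_def)
  have nzB: "B \<noteq> 0" using denom_nz assms fields by (simp add: upper_half_plane_def B_def)
  have det: "a*d - b*c = 1" using assms fields by (simp add: psl2_def)
  have ImA: "Im (act g z) = Im z / (cmod A)^2" using Im_act[of c z d a b] nzA det fields A_def by simp
  have ImB: "Im (act g w) = Im w / (cmod B)^2" using Im_act[of c w d a b] nzB det fields B_def by simp
  have diff: "act g z - act g w = (z - w) / (A * B)"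
  proof -
    have "act g z - act g w = ((of_real a * z + of_real b) * B - (of_real a * w + of_real b) * A) / (A*B)"
      using nzA nzB fields by (simp add: act_def A_def B_def field_simps)
    also have "(of_real a * z + of_real b) * B - (of_real a * w + of_real b) * A = of_real (a*d-b*c) * (z - w)"
      by (simp add: A_def B_def algebra_simps)
    finally show ?thesis using det by simp
  qed
  have "u_fun (act g z) (act g w) = (cmod (z-w) / (cmod A * cmod B))^2 / (4 * (Im z / (cmod A)^2) * (Im w / (cmod B)^2))"
    unfolding u_fun_def diff ImA ImB by (simp add: norm_divide norm_mult)
  also have "\<dots> = u_fun z w" using nzA nzB by (simp add: u_fun_def field_simps)
  finally show ?thesis .
qed



lemma rot_fix: assumes "s \<noteq> 0" "w \<in> \<H>" "act (c, s, -s, c) w = w" shows "w = \<i>"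
proof -
  have D: "of_real (-s) * w + of_real c \<noteq> 0"
  proof
    assume "of_real (-s) * w + of_real c = 0"
    hence "Im (of_real (-s) * w + of_real c) = 0" by simp
    thus False using assms by (simp add: upper_half_plane_def)
  qed
  have "(of_real c * w + of_real s) = w * (of_real (-s) * w + of_real c)"
    using assms(3) D by (simp add: act_def field_simps)
  hence "of_real s * (w * w + 1) = 0" by (simp add: algebra_simps)
  hence "w * w + 1 = 0" using assms(1) by simp
  hence "(w - \<i>) * (w + \<i>) = 0" by (simp add: algebra_simps)
  hence "w = \<i> \<or> w = - \<i>" by (simp add: eq_neg_iff_add_eq_0)
  thus ?thesis using assms(2) by (auto simp: upper_half_plane_def)
qed

lemma rot_u: assumes "c^2 + s^2 = 1" "s > 0" "w \<in> \<H>"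
  shows "u_fun w (act (c, s, -s, c) w) = s^2 * (sinh (rho w))^2"
proof -
  define D where "D = of_real (-s) * w + of_real c"
  have y: "Im w > 0" using assms by (simp add: upper_half_plane_def)
  have D: "D \<noteq> 0"
  proof
    assume "D = 0"
    hence "Im D = 0" by simp
    thus False using assms y by (simp add: D_def)
  qed
  have ImK: "Im (act (c, s, -s, c) w) = Im w / (cmod D)^2"
    using Im_act[of "-s" w c c s] D assms(1) by (simp add: D_def power2_eq_square)
  have diff: "w - act (c, s, -s, c) w = - (of_real s * (1 + w*w) / D)"
    using D by (simp add: act_def D_def field_simps)
  have "u_fun w (act (c, s, -s, c) w) = (s * cmod (1 + w*w) / cmod D)^2 / (4 * Im w * (Im w / (cmod D)^2))"
    unfolding u_fun_def diff ImK using assms(2) by (simp add: norm_divide norm_mult)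
  also have "\<dots> = s^2 * (cmod (1 + w*w))^2 / (4 * (Im w)^2)"
    using D y by (simp add: field_simps power2_eq_square)
  finally have u: "u_fun w (act (c, s, -s, c) w) = s^2 * (cmod (1 + w*w))^2 / (4 * (Im w)^2)" .
  define T where "T = 1 + (cmod (\<i> - w))\<^sup>2 / (2 * Im \<i> * Im w)"
  have T1: "T \<ge> 1" using y by (simp add: T_def)
  have "(sinh (rho w))^2 = T^2 - 1"
  proof -
    have "rho w = arcosh T" by (simp add: rho_def hyp_dist_def T_def)
    thus ?thesis using T1 by (simp add: sinh_square_eq)
  qed
  also have "\<dots> = (cmod (1 + w*w))^2 / (4 * (Im w)^2)"
  proof -
    have a: "(cmod (\<i> - w))\<^sup>2 = (Re w)^2 + (1 - Im w)^2" by (simp add: cmod_power2)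
    have b: "(cmod (1 + w*w))^2 = (1 + (Re w)^2 - (Im w)^2)^2 + (2 * Re w * Im w)^2"
      by (simp only: cmod_power2) (simp add: power2_eq_square algebra_simps)
    have T: "T = 1 + ((Re w)^2 + (1 - Im w)^2) / (2 * Im w)" using a by (simp add: T_def)
    have "T^2 - 1 = ((1 + (Re w)^2 - (Im w)^2)^2 + (2 * Re w * Im w)^2) / (4 * (Im w)^2)"
      unfolding T using y by (simp add: field_simps) (simp add: power2_eq_square algebra_simps)
    thus ?thesis using b by simp
  qed
  finally show ?thesis using u by simp
qed

lemma powr_part: fixes t a :: real and s :: complex
  assumes "t > 0" "a \<ge> 0"
  shows "of_real t powr s * of_real (t^2 * a^2) powr (- s / 2) = of_real a powr (- s)"
proof (cases "a = 0")
  case True thus ?thesis by simp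
next
  case False
  hence a: "a > 0" using assms by simp
  have "of_real t powr s * of_real (t^2 * a^2) powr (- s / 2)
      = exp (s * of_real (ln t)) * exp ((- s / 2) * of_real (ln (t^2 * a^2)))"
    using a assms Ln_of_real[of t] Ln_of_real[of "t^2*a^2"]
    by (simp add: powr_def del: of_real_mult of_real_power)
  also have "ln (t^2 * a^2) = 2 * ln t + 2 * ln a" using a assms by (simp add: ln_mult ln_realpow)
  also have "exp (s * of_real (ln t)) * exp ((- s / 2) * of_real (2 * ln t + 2 * ln a)) = exp ((- s) * of_real (ln a))"
    by (simp add: exp_add[symmetric] algebra_simps)
  also have "\<dots> = of_real a powr (- s)" using a by (simp add: powr_def Ln_of_real)
  finally show ?thesis .
qed



lemma rho_nonneg: "w \<in> \<H> \<Longrightarrow> rho w \<ge> 0"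
  unfolding rho_def hyp_dist_def upper_half_plane_def
  by (intro arcosh_nonneg_real) simp

theorem lemma3p3:
  fixes \<Gamma> :: "mat2 set" and e z s :: complex and n :: nat and \<sigma>e \<gamma>e :: mat2
  assumes "fuchsian_first_kind \<Gamma>"
    and "e \<in> \<H>"
    and "finite (stabilizer \<Gamma> e)" and "card (stabilizer \<Gamma> e) = n" and "n > 1"
    and "\<gamma>e \<in> stabilizer \<Gamma> e" and "stabilizer \<Gamma> e = range (ppow \<gamma>e)"
    and "psl2 \<sigma>e" and "act \<sigma>e \<i> = e"
    and "pmul (pinv \<sigma>e) (pmul \<gamma>e \<sigma>e) =
           pnorm (cos (pi / n), sin (pi / n), - sin (pi / n), cos (pi / n))"
    and "z \<in> \<H>" and "\<forall>\<gamma>\<in>\<Gamma>. z \<noteq> act \<gamma> e"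
    and "Re s > 1"
  shows "ell_eisenstein \<Gamma> e \<sigma>e z s =
           complex_of_real (sin (pi / n)) powr s *
           (\<Sum>\<^sub>\<infinity> \<gamma> \<in> conj_class \<Gamma> \<gamma>e. complex_of_real (u_fun z (act \<gamma> z)) powr (- s / 2))"
proof -
  define S where "S = stabilizer \<Gamma> e"
  define cc where "cc = cos (pi / n)"
  define sn where "sn = sin (pi / n)"
  define k where "k = pmul (pinv \<sigma>e) (pmul \<gamma>e \<sigma>e)"
  have sg: "psl2_subgroup \<Gamma>" using assms(1) by (simp add: fuchsian_first_kind_def fuchsian_def)
  have GP: "\<And>g. g \<in> \<Gamma> \<Longrightarrow> psl2 g" and Gid: "pid \<in> \<Gamma>"
    and Gmul: "\<And>g h. g \<in> \<Gamma> \<Longrightarrow> h \<in> \<Gamma> \<Longrightarrow> pmul g h \<in> \<Gamma>"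
    and Ginv: "\<And>g. g \<in> \<Gamma> \<Longrightarrow> pinv g \<in> \<Gamma>"
    using sg by (auto simp: psl2_subgroup_def)
  have eH: "e \<in> \<H>" by fact
  have SG: "\<And>h. h \<in> S \<Longrightarrow> h \<in> \<Gamma>" and Se: "\<And>h. h \<in> S \<Longrightarrow> act h e = e"
    by (auto simp: S_def stabilizer_def)
  have Sin: "\<And>h. h \<in> \<Gamma> \<Longrightarrow> act h e = e \<Longrightarrow> h \<in> S" by (auto simp: S_def stabilizer_def)
  have Sid: "pid \<in> S" using Gid by (auto intro: Sin)
  have Smul: "pmul g h \<in> S" if g: "g \<in> S" and h: "h \<in> S" for g h
  proof (rule Sin)
    show "pmul g h \<in> \<Gamma>" using g h SG Gmul by blast
    have "act (pmul g h) e = act g (act h e)" using act_pmul[OF GP[OF SG[OF h]] eH] .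
    thus "act (pmul g h) e = e" using Se g h by simp
  qed
  have Sinv: "pinv h \<in> S" if h: "h \<in> S" for h
  proof (rule Sin)
    show "pinv h \<in> \<Gamma>" using h SG Ginv by blast
    have "act (pinv h) (act h e) = e" using act_pinv1[OF GP[OF SG[OF h]] eH] .
    thus "act (pinv h) e = e" using Se h by simp
  qed
  have geG: "\<gamma>e \<in> \<Gamma>" and gee: "act \<gamma>e e = e" using assms(6) by (auto simp: stabilizer_def)
  have geP: "psl2 \<gamma>e" using GP geG by simp
  have n2: "real n \<ge> 2" using assms(5) by simp
  have snpos: "sn > 0" unfolding sn_def
    by (rule sin_gt_zero) (use n2 in \<open>auto simp: field_simps\<close>)
  have cs: "cc^2 + sn^2 = 1" by (simp add: cc_def sn_def)
  have kP: "psl2 k" using geP assms(8) by (simp add: k_def)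
  have kact: "\<And>w. act k w = act (cc, sn, -sn, cc) w"
    using assms(10) by (simp add: k_def cc_def sn_def)
  have kact2: "\<And>w. w \<in> \<H> \<Longrightarrow> act \<sigma>e (act k w) = act \<gamma>e (act \<sigma>e w)"
    unfolding k_def using geP assms(8) by (simp add: act_pmul act_H)
  have fixpt: "\<And>x. x \<in> \<H> \<Longrightarrow> act \<gamma>e x = x \<Longrightarrow> x = e"
  proof -
    fix x assume xH: "x \<in> \<H>" and fx: "act \<gamma>e x = x"
    define y where "y = act (pinv \<sigma>e) x"
    have yH: "y \<in> \<H>" using xH assms(8) by (simp add: y_def act_H)
    have sy: "act \<sigma>e y = x" using xH assms(8) by (simp add: y_def)
    have "act \<sigma>e (act k y) = act \<sigma>e y" using kact2[OF yH] sy fx by simp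
    hence "act (pinv \<sigma>e) (act \<sigma>e (act k y)) = act (pinv \<sigma>e) (act \<sigma>e y)" by simp
    hence "act k y = y" using yH kP assms(8) by (simp add: act_H)
    hence "act (cc, sn, -sn, cc) y = y" using kact by simp
    hence "y = \<i>" using rot_fix snpos yH by (metis less_irrefl)
    thus "x = e" using sy assms(9) by simp
  qed
  have ppowP: "\<And>m. psl2 (ppow \<gamma>e m)"
  proof -
    fix m show "psl2 (ppow \<gamma>e m)" by (induction m) (simp_all add: geP)
  qed
  have ppowC: "\<And>m. pmul \<gamma>e (ppow \<gamma>e m) = pmul (ppow \<gamma>e m) \<gamma>e"
  proof -
    fix m show "pmul \<gamma>e (ppow \<gamma>e m) = pmul (ppow \<gamma>e m) \<gamma>e"
    proof (induction m)
      case 0 thus ?case using geP by simp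
    next
      case (Suc m)
      have "pmul \<gamma>e (ppow \<gamma>e (Suc m)) = pmul \<gamma>e (pmul \<gamma>e (ppow \<gamma>e m))" by simp
      also have "\<dots> = pmul \<gamma>e (pmul (ppow \<gamma>e m) \<gamma>e)" using Suc by simp
      also have "\<dots> = pmul (ppow \<gamma>e (Suc m)) \<gamma>e" using geP ppowP by (simp add: pmul_assoc)
      finally show ?case .
    qed
  qed
  have SC: "\<And>h x. h \<in> S \<Longrightarrow> psl2 x \<Longrightarrow> pmul \<gamma>e (pmul h x) = pmul h (pmul \<gamma>e x)"
  proof -
    fix h x assume h: "h \<in> S" and x: "psl2 x"
    obtain m where hm: "h = ppow \<gamma>e m" using h assms(7) S_def by auto
    have "pmul \<gamma>e (pmul h x) = pmul (pmul \<gamma>e h) x" using geP ppowP hm x by (simp add: pmul_assoc)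
    also have "\<dots> = pmul (pmul h \<gamma>e) x" using ppowC hm by simp
    also have "\<dots> = pmul h (pmul \<gamma>e x)" using geP ppowP hm x by (simp add: pmul_assoc)
    finally show "pmul \<gamma>e (pmul h x) = pmul h (pmul \<gamma>e x)" .
  qed
  define conj where "conj \<delta> = pmul (pinv \<delta>) (pmul \<gamma>e \<delta>)" for \<delta>
  have conj_inv: "\<And>h \<sigma>. h \<in> S \<Longrightarrow> \<sigma> \<in> \<Gamma> \<Longrightarrow> conj (pmul h \<sigma>) = conj \<sigma>"
  proof -
    fix h \<sigma> assume h: "h \<in> S" and \<sigma>: "\<sigma> \<in> \<Gamma>"
    have hP: "psl2 h" and sP: "psl2 \<sigma>" using h \<sigma> SG GP by auto
    have "conj (pmul h \<sigma>) = pmul (pmul (pinv \<sigma>) (pinv h)) (pmul h (pmul \<gamma>e \<sigma>))"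
      unfolding conj_def using hP sP SC[OF h sP] by (simp add: pinv_pmul)
    also have "\<dots> = conj \<sigma>" unfolding conj_def using hP sP geP by (simp add: pmul_assoc)
    finally show "conj (pmul h \<sigma>) = conj \<sigma>" .
  qed
  define L where "L = left_quotient S \<Gamma>"
  define K where "K = conj_class \<Gamma> \<gamma>e"
  define rep where "rep C = (SOME \<gamma>. \<gamma> \<in> C)" for C :: "mat2 set"
  have coset: "\<And>h0 \<gamma>0. h0 \<in> S \<Longrightarrow> \<gamma>0 \<in> \<Gamma> \<Longrightarrow>
      (\<lambda>h. pmul h (pmul h0 \<gamma>0)) ` S = (\<lambda>h. pmul h \<gamma>0) ` S"
  proof -
    fix h0 \<gamma>0 assume h0: "h0 \<in> S" and g0: "\<gamma>0 \<in> \<Gamma>"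
    have P: "psl2 h0" "psl2 \<gamma>0" using h0 g0 SG GP by auto
    show "(\<lambda>h. pmul h (pmul h0 \<gamma>0)) ` S = (\<lambda>h. pmul h \<gamma>0) ` S"
    proof (intro equalityI subsetI)
      fix x assume "x \<in> (\<lambda>h. pmul h (pmul h0 \<gamma>0)) ` S"
      then obtain h where h: "h \<in> S" and x: "x = pmul h (pmul h0 \<gamma>0)" by auto
      have "x = pmul (pmul h h0) \<gamma>0" using x P h SG GP by (simp add: pmul_assoc)
      thus "x \<in> (\<lambda>h. pmul h \<gamma>0) ` S" using Smul[OF h h0] by auto
    next
      fix x assume "x \<in> (\<lambda>h. pmul h \<gamma>0) ` S"
      then obtain h where h: "h \<in> S" and x: "x = pmul h \<gamma>0" by auto
      have "x = pmul (pmul h (pinv h0)) (pmul h0 \<gamma>0)" using x P h SG GP by (simp add: pmul_assoc)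
      thus "x \<in> (\<lambda>h. pmul h (pmul h0 \<gamma>0)) ` S" using Smul[OF h Sinv[OF h0]] by auto
    qed
  qed
  have repC: "\<And>C. C \<in> L \<Longrightarrow> rep C \<in> \<Gamma> \<and> C = (\<lambda>h. pmul h (rep C)) ` S"
  proof -
    fix C assume "C \<in> L"
    then obtain \<gamma>0 where g0: "\<gamma>0 \<in> \<Gamma>" and C: "C = (\<lambda>h. pmul h \<gamma>0) ` S"
      by (auto simp: L_def left_quotient_def)
    have "pmul pid \<gamma>0 \<in> C" using C Sid by auto
    hence "rep C \<in> C" unfolding rep_def by (rule someI)
    then obtain h0 where h0: "h0 \<in> S" and r: "rep C = pmul h0 \<gamma>0" using C by auto
    show "rep C \<in> \<Gamma> \<and> C = (\<lambda>h. pmul h (rep C)) ` S"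
      using r h0 g0 SG Gmul coset[OF h0 g0] C by auto
  qed
  have repconj: "\<And>\<sigma>. \<sigma> \<in> \<Gamma> \<Longrightarrow> conj (rep ((\<lambda>h. pmul h \<sigma>) ` S)) = conj \<sigma>"
  proof -
    fix \<sigma> assume g0: "\<sigma> \<in> \<Gamma>"
    let ?C = "(\<lambda>h. pmul h \<sigma>) ` S"
    have "pmul pid \<sigma> \<in> ?C" using Sid by auto
    hence "rep ?C \<in> ?C" unfolding rep_def by (rule someI)
    then obtain h0 where h0: "h0 \<in> S" and r: "rep ?C = pmul h0 \<sigma>" by auto
    show "conj (rep ?C) = conj \<sigma>" using r conj_inv[OF h0 g0] by simp
  qed
  have bij: "bij_betw (\<lambda>C. conj (rep C)) L K"
  proof (rule bij_betw_imageI)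
    show "inj_on (\<lambda>C. conj (rep C)) L"
    proof (rule inj_onI)
      fix C1 C2 assume C1: "C1 \<in> L" and C2: "C2 \<in> L" and eq: "conj (rep C1) = conj (rep C2)"
      define d1 where "d1 = rep C1"
      define d2 where "d2 = rep C2"
      have d1: "d1 \<in> \<Gamma>" and C1e: "C1 = (\<lambda>h. pmul h d1) ` S" using repC[OF C1] d1_def by auto
      have d2: "d2 \<in> \<Gamma>" and C2e: "C2 = (\<lambda>h. pmul h d2) ` S" using repC[OF C2] d2_def by auto
      have P1: "psl2 d1" and P2: "psl2 d2" using d1 d2 GP by auto
      define y where "y = act (pinv d1) e"
      have yH: "y \<in> \<H>" using eH P1 by (simp add: y_def act_H)
      have d1y: "act d1 y = e" using eH P1 by (simp add: y_def)
      have "act (conj d1) y = y"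
        unfolding conj_def using P1 geP yH d1y gee by (simp add: act_pmul act_H y_def)
      hence "act (conj d2) y = y" using eq d1_def d2_def by simp
      hence "act (pinv d2) (act \<gamma>e (act d2 y)) = y"
        unfolding conj_def using P2 geP yH by (simp add: act_pmul act_H)
      hence "act d2 (act (pinv d2) (act \<gamma>e (act d2 y))) = act d2 y" by simp
      hence "act \<gamma>e (act d2 y) = act d2 y" using P2 geP yH by (simp add: act_H)
      hence fy: "act d2 y = e" using fixpt P2 yH by (simp add: act_H)
      define g where "g = pmul d2 (pinv d1)"
      have gG: "g \<in> \<Gamma>" using d1 d2 Gmul Ginv by (simp add: g_def)
      have "act g e = e" using fy P1 P2 eH by (simp add: g_def act_pmul y_def)
      hence gS: "g \<in> S" using gG Sin by simp
      have "d2 = pmul g d1" using P1 P2 by (simp add: g_def pmul_assoc)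
      thus "C1 = C2" using C1e C2e coset[OF gS d1] by simp
    qed
  next
    show "(\<lambda>C. conj (rep C)) ` L = K"
    proof (intro equalityI subsetI)
      fix x assume "x \<in> (\<lambda>C. conj (rep C)) ` L"
      then obtain C where C: "C \<in> L" and x: "x = conj (rep C)" by auto
      thus "x \<in> K" unfolding K_def conj_class_def conj_def using repC[OF C] by blast
    next
      fix x assume "x \<in> K"
      then obtain \<sigma> where g0: "\<sigma> \<in> \<Gamma>" and x: "x = conj \<sigma>" by (auto simp: K_def conj_class_def conj_def)
      have "(\<lambda>h. pmul h \<sigma>) ` S \<in> L" unfolding L_def left_quotient_def using g0 by blast
      thus "x \<in> (\<lambda>C. conj (rep C)) ` L" using repconj[OF g0] x by force
    qed
  qed
  define F where "F \<gamma> = complex_of_real (u_fun z (act \<gamma> z)) powr (- s / 2)" for \<gamma>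
  define c0 where "c0 = complex_of_real sn powr s"
  have tm: "\<And>C. C \<in> L \<Longrightarrow>
      complex_of_real (sinh (rho (act (pinv \<sigma>e) (act (rep C) z)))) powr (-s) = c0 * F (conj (rep C))"
  proof -
    fix C assume C: "C \<in> L"
    define d where "d = rep C"
    have dP: "psl2 d" using repC[OF C] GP d_def by auto
    define w where "w = act (pinv \<sigma>e) (act d z)"
    have wH: "w \<in> \<H>" using assms(11) dP assms(8) by (simp add: w_def act_H)
    have dz: "act d z = act \<sigma>e w" using assms(11) dP assms(8) by (simp add: w_def act_H)
    have "u_fun z (act (conj d) z) = u_fun (act d z) (act d (act (conj d) z))"
    proof -
      define v where "v = act \<gamma>e (act d z)"
      have vH: "v \<in> \<H>" using dP geP assms(11) by (simp add: v_def act_H)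
      have a1: "act (conj d) z = act (pinv d) v" unfolding conj_def v_def using dP geP assms(11) by (simp add: act_pmul act_H)
      have a2: "act d (act (pinv d) v) = v" using dP vH by simp
      have "u_fun (act d z) (act d (act (pinv d) v)) = u_fun z (act (pinv d) v)"
        by (rule u_inv[OF dP assms(11)]) (use vH dP in \<open>simp add: act_H\<close>)
      thus ?thesis using a1 a2 by simp
    qed
    also have "act d (act (conj d) z) = act \<gamma>e (act d z)"
      unfolding conj_def using dP geP assms(11) by (simp add: act_pmul act_H)
    also have "u_fun (act d z) (act \<gamma>e (act d z)) = u_fun (act \<sigma>e w) (act \<sigma>e (act k w))"
      using dz kact2[OF wH] by simp
    also have "\<dots> = u_fun w (act k w)" using u_inv assms(8) wH kP by (simp add: act_H)
    also have "\<dots> = sn^2 * (sinh (rho w))^2" using rot_u[OF cs snpos wH] kact by simp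
    finally have u: "u_fun z (act (conj d) z) = sn^2 * (sinh (rho w))^2" .
    have "sinh (rho w) \<ge> 0" using rho_nonneg[OF wH] by simp
    thus "complex_of_real (sinh (rho (act (pinv \<sigma>e) (act (rep C) z)))) powr (-s) = c0 * F (conj (rep C))"
      unfolding F_def c0_def u[unfolded d_def] using powr_part[OF snpos] by (simp add: w_def d_def)
  qed
  have "ell_eisenstein \<Gamma> e \<sigma>e z s = (\<Sum>\<^sub>\<infinity> C \<in> L. c0 * F (conj (rep C)))"
    unfolding ell_eisenstein_def L_def[symmetric] S_def[symmetric]
    using tm by (intro infsum_cong) (simp add: rep_def)
  also have "\<dots> = c0 * (\<Sum>\<^sub>\<infinity> C \<in> L. F (conj (rep C)))" by (rule infsum_cmult_right')
  also have "(\<Sum>\<^sub>\<infinity> C \<in> L. F (conj (rep C))) = (\<Sum>\<^sub>\<infinity> \<gamma> \<in> K. F \<gamma>)"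
    by (rule infsum_reindex_bij_betw[OF bij])
  finally show ?thesis by (simp add: c0_def sn_def F_def K_def)
qed

end
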